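(* Let $\mathcal H=\mathcal H_A\otimes\mathcal H_B$ with $\mathcal H_A,\mathcal H_B$ finite-dimensional complex Hilbert spaces, and let $S=\{|\alpha_i\rangle\otimes|\beta_i\rangle\}_{i=1}^{|S|}$ be a partial product basis in $\mathcal H$. Suppose $S$ is uncompletable in $\mathcal H$, but $S$ is completable in some local extension $\mathcal H'$ of $\mathcal H$. Define $$\rho_S=\frac{1}{\dim\mathcal H-|S|}\Big(\mathbf 1-\sum_{i=1}^{|S|}|\alpha_i\rangle\langle\alpha_i|\otimes|\beta_i\rangle\langle\beta_i|\Big).$$ Then $\mathcal L_{\mathcal E}(\rho_S)>\mathcal R(\rho_S)$.
   Context: A partial product basis in $\mathcal H_A\otimes\mathcal H_B$ is a set of $k<\dim\mathcal H$ mutually orthogonal unit product vectors $|\alpha_i\rangle\otimes|\beta_i\rangle$. It is completable in a space $\mathcal K\supseteq\mathcal H$ of the form $\mathcal K=\mathcal K_A\otimes\mathcal K_B$ if it can be extended by further mutually orthogonal unit product vectors (product with respect to $\mathcal K_A\otimes\mathcal K_B$) to an orthonormal basis of $\mathcal K$; it is uncompletable in $\mathcal H$ if this is impossible in $\mathcal H$ itself, i.e. fewer than $\dim\mathcal H-k$ additional mutually orthogonal product vectors orthogonal to $S$ can be added. A local extension of $\mathcal H=\mathcal H_A\otimes\mathcal H_B$ is a space $\mathcal H'=(\mathcal H_A\oplus\mathcal H_A')\otimes(\mathcal H_B\oplus\mathcal H_B')$. $\mathcal R(\rho)$ is the rank of $\rho$. For a density matrix $\rho$ on $\mathcal H_A\otimes\mathcal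 H_B$, $\mathcal L_{\mathcal E}(\rho)$ (the optimal ensemble cardinality) is the least number of distinct pure product states $|\psi_i\rangle|\phi_i\rangle$ in a decomposition $\rho=\sum_i p_i|\psi_i\rangle\langle\psi_i|\otimes|\phi_i\rangle\langle\phi_i|$ with $p_i>0$ (such a decomposition exists exactly when $\rho$ is separable). *)

theory Defs
  imports "Jordan_Normal_Form.DL_Rank" "Jordan_Normal_Form.Conjugate"
begin

text \<open>Finite-dimensional Hilbert spaces H_A = C^m, H_B = C^n; vectors of H_A (x) H_B
  are vectors of C^(m*n), with the standard (Kronecker) identification
  index k <-> (k div n, k mod n).\<close>

definition tensor_vec :: "complex vec \<Rightarrow> complex vec \<Rightarrow> complex vec" where
  "tensor_vec a b = vec (dim_vec a * dim_vec b) (\<lambda>k. a $ (k div dim_vec b) * b $ (k mod dim_vec b))"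

definition ket_bra :: "complex vec \<Rightarrow> complex mat" where
  "ket_bra v = mat (dim_vec v) (dim_vec v) (\<lambda>(i,j). v $ i * cnj (v $ j))"

definition orth_prod_family ::
  "nat \<Rightarrow> nat \<Rightarrow> nat \<Rightarrow> (nat \<Rightarrow> complex vec) \<Rightarrow> (nat \<Rightarrow> complex vec) \<Rightarrow> bool" where
  "orth_prod_family m n k \<alpha> \<beta> \<longleftrightarrow>
     (\<forall>l<k. \<alpha> l \<in> carrier_vec m \<and> \<beta> l \<in> carrier_vec n \<and>
            \<alpha> l \<bullet>c \<alpha> l = 1 \<and> \<beta> l \<bullet>c \<beta> l = 1) \<and>
     (\<forall>l<k. \<forall>l'<k. l \<noteq> l' \<longrightarrow>
            tensor_vec (\<alpha> l) (\<beta> l) \<bullet>c tensor_vec (\<alpha> l') (\<beta> l') = 0)"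

definition partial_product_basis ::
  "nat \<Rightarrow> nat \<Rightarrow> nat \<Rightarrow> (nat \<Rightarrow> complex vec) \<Rightarrow> (nat \<Rightarrow> complex vec) \<Rightarrow> bool" where
  "partial_product_basis m n k \<alpha> \<beta> \<longleftrightarrow> orth_prod_family m n k \<alpha> \<beta> \<and> k < m * n"

text \<open>Zero-padding embedding C^d into C^d' (d \<le> d'), i.e. C^d' = C^d \<oplus> C^(d'-d).\<close>
definition pad_vec :: "nat \<Rightarrow> complex vec \<Rightarrow> complex vec" where
  "pad_vec d' v = vec d' (\<lambda>i. if i < dim_vec v then v $ i else 0)"

text \<open>Completable in C^m' (x) C^n': the (embedded) family extends to m'*n' mutually
  orthogonal unit product vectors, i.e. to an orthonormal product basis of C^m' (x) C^n'
  (an orthonormal family of full cardinality is a basis).\<close>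
definition completable_in ::
  "nat \<Rightarrow> nat \<Rightarrow> nat \<Rightarrow> (nat \<Rightarrow> complex vec) \<Rightarrow> (nat \<Rightarrow> complex vec) \<Rightarrow> bool" where
  "completable_in m' n' k \<alpha> \<beta> \<longleftrightarrow>
     (\<exists>\<alpha>' \<beta>'. orth_prod_family m' n' (m' * n') \<alpha>' \<beta>' \<and>
        (\<forall>l<k. \<alpha>' l = pad_vec m' (\<alpha> l) \<and> \<beta>' l = pad_vec n' (\<beta> l)))"

definition rho_S ::
  "nat \<Rightarrow> nat \<Rightarrow> nat \<Rightarrow> (nat \<Rightarrow> complex vec) \<Rightarrow> (nat \<Rightarrow> complex vec) \<Rightarrow> complex mat" where
  "rho_S m n k \<alpha> \<beta> =
     (1 / of_nat (m * n - k)) \<cdot>\<^sub>m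
       mat (m * n) (m * n) (\<lambda>(i, j). (if i = j then 1 else 0) -
          (\<Sum>l<k. ket_bra (tensor_vec (\<alpha> l) (\<beta> l)) $$ (i, j)))"

definition product_decomposition :: "nat \<Rightarrow> nat \<Rightarrow> complex mat \<Rightarrow> nat \<Rightarrow> bool" where
  "product_decomposition m n \<rho> N \<longleftrightarrow>
     (\<exists>p :: nat \<Rightarrow> real. \<exists>\<psi> \<phi>.
        (\<forall>i<N. p i > 0 \<and> \<psi> i \<in> carrier_vec m \<and> \<phi> i \<in> carrier_vec n \<and>
               \<psi> i \<bullet>c \<psi> i = 1 \<and> \<phi> i \<bullet>c \<phi> i = 1) \<and>
        inj_on (\<lambda>i. ket_bra (tensor_vec (\<psi> i) (\<phi> i))) {..<N} \<and>
        \<rho> = mat (m * n) (m * n) (\<lambda>(a, b). \<Sum>i<N. complex_of_real (p i) *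
                 ket_bra (tensor_vec (\<psi> i) (\<phi> i)) $$ (a, b)))"

definition optimal_ensemble_cardinality :: "nat \<Rightarrow> nat \<Rightarrow> complex mat \<Rightarrow> nat" where
  "optimal_ensemble_cardinality m n \<rho> = (LEAST N. product_decomposition m n \<rho> N)"

definition mat_rank :: "complex mat \<Rightarrow> nat" where
  "mat_rank A = vec_space.rank (dim_row A) A"

end

theory Submission
  imports Defs
begin
lemma cdot_def: "(v::complex vec) \<bullet>c w = (\<Sum>i<dim_vec w. v$i * cnj (w$i))"
  unfolding scalar_prod_def by (simp add: atLeast0LessThan)

lemma cdot_carrier: "w \<in> carrier_vec d \<Longrightarrow> (\<Sum>a<d. v$a * cnj (w$a)) = (v::complex vec) \<bullet>c w"
  by (simp add: cdot_def)

lemma tensor_dim[simp]: "dim_vec (tensor_vec a b) = dim_vec a * dim_vec b"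
  unfolding tensor_vec_def by simp

lemma tensor_idx: "x < dim_vec a * dim_vec b \<Longrightarrow> tensor_vec a b $ x = a $ (x div dim_vec b) * b $ (x mod dim_vec b)"
  unfolding tensor_vec_def by simp

lemma ket_bra_dim[simp]: "dim_row (ket_bra v) = dim_vec v" "dim_col (ket_bra v) = dim_vec v"
  unfolding ket_bra_def by auto

lemma ket_bra_idx: "i < dim_vec v \<Longrightarrow> j < dim_vec v \<Longrightarrow> ket_bra v $$ (i,j) = v$i * cnj (v$j)"
  unfolding ket_bra_def by simp

lemma sum_divmod: "(\<Sum>x<(m::nat)*n. f (x div n) (x mod n)) = (\<Sum>i<m. \<Sum>j<n. (f i j :: 'a::comm_monoid_add))"
proof (induction m)
  case 0 then show ?case by simp
next
  case (Suc m)
  have "{..<Suc m * n} = {..<m*n} \<union> {m*n..<n+m*n}" by auto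
  then have "(\<Sum>x<Suc m*n. f (x div n) (x mod n)) = (\<Sum>x<m*n. f (x div n) (x mod n)) + (\<Sum>x\<in>{m*n..<n+m*n}. f (x div n) (x mod n))"
    by (simp add: sum.union_disjoint ivl_disj_int_one(2))
  also have "(\<Sum>x\<in>{m*n..<n+m*n}. f (x div n) (x mod n)) = (\<Sum>x\<in>{0+m*n..<n+m*n}. f (x div n) (x mod n))" by simp
  also have "\<dots> = (\<Sum>j\<in>{0..<n}. f ((j+m*n) div n) ((j+m*n) mod n))" by (rule sum.shift_bounds_nat_ivl)
  also have "\<dots> = (\<Sum>j<n. f m j)"
    by (rule sum.cong) auto
  finally show ?case using Suc by simp
qed

lemma tensor_cdot:
  assumes "dim_vec a = dim_vec c" "dim_vec b = dim_vec d"
  shows "tensor_vec a b \<bullet>c tensor_vec c d = (a \<bullet>c c) * (b \<bullet>c d)"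
proof -
  have "tensor_vec a b \<bullet>c tensor_vec c d = (\<Sum>x<dim_vec c * dim_vec d. a $ (x div dim_vec d) * b $ (x mod dim_vec d) * cnj (c $ (x div dim_vec d) * d $ (x mod dim_vec d)))"
    unfolding cdot_def using assms by (intro sum.cong) (auto simp: tensor_idx)
  also have "\<dots> = (\<Sum>i<dim_vec c. \<Sum>j<dim_vec d. a $ i * b $ j * cnj (c $ i * d $ j))"
    by (rule sum_divmod)
  also have "\<dots> = (\<Sum>i<dim_vec c. a$i * cnj (c$i)) * (\<Sum>j<dim_vec d. b$j * cnj (d$j))"
    by (simp add: sum_distrib_left sum_distrib_right mult_ac sum.swap[of _ "{..<dim_vec d}"])
  finally show ?thesis by (simp add: cdot_def)
qed

lemma ofam_D: assumes "orth_prod_family m n k \<alpha> \<beta>" "l < k"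
  shows "\<alpha> l \<in> carrier_vec m" "\<beta> l \<in> carrier_vec n" "\<alpha> l \<bullet>c \<alpha> l = 1" "\<beta> l \<bullet>c \<beta> l = 1"
proof -
  have h: "\<forall>l<k. \<alpha> l \<in> carrier_vec m \<and> \<beta> l \<in> carrier_vec n \<and> \<alpha> l \<bullet>c \<alpha> l = 1 \<and> \<beta> l \<bullet>c \<beta> l = 1"
    using assms(1) unfolding orth_prod_family_def by (rule conjunct1)
  then show "\<alpha> l \<in> carrier_vec m" "\<beta> l \<in> carrier_vec n" "\<alpha> l \<bullet>c \<alpha> l = 1" "\<beta> l \<bullet>c \<beta> l = 1"
    using assms(2) by auto
qed

lemma ofam_unit: assumes "orth_prod_family m n k \<alpha> \<beta>" "l < k"
  shows "tensor_vec (\<alpha> l) (\<beta> l) \<in> carrier_vec (m*n)"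
proof -
  have "dim_vec (\<alpha> l) = m" "dim_vec (\<beta> l) = n" using ofam_D(1,2)[OF assms] by auto
  then show ?thesis by (intro carrier_vecI) simp
qed

lemma ofam_orth: assumes "orth_prod_family m n k \<alpha> \<beta>" "l < k" "l' < k"
  shows "tensor_vec (\<alpha> l) (\<beta> l) \<bullet>c tensor_vec (\<alpha> l') (\<beta> l') = (if l = l' then 1 else 0)"
proof (cases "l = l'")
  case True
  have "dim_vec (\<alpha> l) = m" "dim_vec (\<beta> l) = n" using ofam_D(1,2)[OF assms(1,2)] by auto
  then have "tensor_vec (\<alpha> l) (\<beta> l) \<bullet>c tensor_vec (\<alpha> l) (\<beta> l) = (\<alpha> l \<bullet>c \<alpha> l) * (\<beta> l \<bullet>c \<beta> l)"
    by (intro tensor_cdot) auto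
  then show ?thesis using True ofam_D(3,4)[OF assms(1,2)] by simp
next
  case False
  have "\<forall>l<k. \<forall>l'<k. l \<noteq> l' \<longrightarrow> tensor_vec (\<alpha> l) (\<beta> l) \<bullet>c tensor_vec (\<alpha> l') (\<beta> l') = 0"
    using assms(1) unfolding orth_prod_family_def by (rule conjunct2)
  then show ?thesis using False assms(2,3) by simp
qed

definition XX :: "nat \<Rightarrow> (nat \<Rightarrow> complex vec) \<Rightarrow> nat \<Rightarrow> nat \<Rightarrow> complex" where
  "XX k u a b = (\<Sum>l<k. u l $ a * cnj (u l $ b))"

lemma XX_proj:
  assumes u: "\<And>l. l < k \<Longrightarrow> u l \<in> carrier_vec d"
    and orth: "\<And>l l'. l < k \<Longrightarrow> l' < k \<Longrightarrow> u l \<bullet>c u l' = (if l = l' then 1 else 0)"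
  shows "(\<Sum>b<d. XX k u a b * XX k u b e) = XX k u a e"
proof -
  let ?F = "\<lambda>l l' b. u l $ a * cnj (u l $ b) * (u l' $ b * cnj (u l' $ e))"
  have "(\<Sum>b<d. XX k u a b * XX k u b e) = (\<Sum>b<d. \<Sum>l<k. \<Sum>l'<k. ?F l l' b)"
    unfolding XX_def by (simp only: sum_product)
  also have "\<dots> = (\<Sum>l<k. \<Sum>b<d. \<Sum>l'<k. ?F l l' b)" by (simp only: sum.swap[of _ "{..<d}" "{..<k}"])
  also have "\<dots> = (\<Sum>l<k. \<Sum>l'<k. \<Sum>b<d. ?F l l' b)" by (rule sum.cong[OF refl]) (simp only: sum.swap[of _ "{..<d}" "{..<k}"])
  also have "\<dots> = (\<Sum>l<k. \<Sum>l'<k. if l' = l then u l $ a * cnj (u l' $ e) else 0)"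
  proof (intro sum.cong refl)
    fix l l' assume l: "l \<in> {..<k}" and l': "l' \<in> {..<k}"
    have "(\<Sum>b<d. u l' $ b * cnj (u l $ b)) = u l' \<bullet>c u l"
      using u[of l] l by (simp add: cdot_carrier)
    also have "\<dots> = (if l' = l then 1 else 0)" using orth l l' by simp
    finally have e: "(\<Sum>b<d. u l' $ b * cnj (u l $ b)) = (if l' = l then 1 else 0)" .
    have "(\<Sum>b<d. ?F l l' b) = u l $ a * cnj (u l' $ e) * (\<Sum>b<d. u l' $ b * cnj (u l $ b))"
      unfolding sum_distrib_left by (rule sum.cong) (auto simp: mult_ac)
    then show "(\<Sum>b<d. ?F l l' b) = (if l' = l then u l $ a * cnj (u l' $ e) else 0)"
      using e by simp
  qed
  also have "\<dots> = XX k u a e"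
    unfolding XX_def by (rule sum.cong[OF refl]) (simp add: sum.delta)
  finally show ?thesis .
qed

lemma XX_trace:
  assumes u: "\<And>l. l < k \<Longrightarrow> u l \<in> carrier_vec d"
    and orth: "\<And>l l'. l < k \<Longrightarrow> l' < k \<Longrightarrow> u l \<bullet>c u l' = (if l = l' then 1 else 0)"
  shows "(\<Sum>a<d. XX k u a a) = of_nat k"
proof -
  have "(\<Sum>a<d. XX k u a a) = (\<Sum>l<k. \<Sum>a<d. u l $ a * cnj (u l $ a))"
    unfolding XX_def by (simp only: sum.swap[of _ "{..<d}" "{..<k}"])
  also have "\<dots> = (\<Sum>l<k. u l \<bullet>c u l)"
    using u by (intro sum.cong refl) (simp add: cdot_carrier)
  also have "\<dots> = (\<Sum>l<k. 1)" using orth by (intro sum.cong) auto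
  finally show ?thesis by simp
qed


lemma cdot_swap: assumes "dim_vec v = dim_vec w" shows "(v::complex vec) \<bullet>c w = cnj (w \<bullet>c v)"
  using assms by (simp add: cdot_def sum_conjugate mult.commute)

lemma GT:
  assumes w: "\<And>i. i < N \<Longrightarrow> w i \<in> carrier_vec d"
  shows "(\<Sum>a<d. \<Sum>i<N. q i * (w i $ a * cnj (w i $ a))) = (\<Sum>i<N. q i * (w i \<bullet>c w i))"
proof -
  have "(\<Sum>a<d. \<Sum>i<N. q i * (w i $ a * cnj (w i $ a))) = (\<Sum>i<N. \<Sum>a<d. q i * (w i $ a * cnj (w i $ a)))"
    by (rule sum.swap)
  also have "\<dots> = (\<Sum>i<N. q i * (w i \<bullet>c w i))"
  proof (rule sum.cong[OF refl])
    fix i assume "i \<in> {..<N}"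
    then have "(\<Sum>a<d. w i $ a * cnj (w i $ a)) = w i \<bullet>c w i" using w by (simp add: cdot_carrier)
    then show "(\<Sum>a<d. q i * (w i $ a * cnj (w i $ a))) = q i * (w i \<bullet>c w i)"
      by (simp add: sum_distrib_left[symmetric])
  qed
  finally show ?thesis .
qed

lemma GP:
  assumes w: "\<And>i. i < N \<Longrightarrow> w i \<in> carrier_vec d"
  shows "(\<Sum>a<d. \<Sum>b<d. (\<Sum>i<N. q i * (w i $ a * cnj (w i $ b))) * (\<Sum>j<N. q j * (w j $ b * cnj (w j $ a))))
     = (\<Sum>i<N. \<Sum>j<N. q i * q j * ((w i \<bullet>c w j) * (w j \<bullet>c w i)))"
proof -
  let ?F = "\<lambda>i j a b. q i * q j * ((w i $ a * cnj (w j $ a)) * (w j $ b * cnj (w i $ b)))"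
  have "(\<Sum>a<d. \<Sum>b<d. (\<Sum>i<N. q i * (w i $ a * cnj (w i $ b))) * (\<Sum>j<N. q j * (w j $ b * cnj (w j $ a))))
      = (\<Sum>a<d. \<Sum>b<d. \<Sum>i<N. \<Sum>j<N. ?F i j a b)"
    by (simp only: sum_product) (simp only: mult_ac)
  also have "\<dots> = (\<Sum>a<d. \<Sum>i<N. \<Sum>b<d. \<Sum>j<N. ?F i j a b)"
    by (rule sum.cong[OF refl]) (rule sum.swap)
  also have "\<dots> = (\<Sum>i<N. \<Sum>a<d. \<Sum>b<d. \<Sum>j<N. ?F i j a b)"
    by (rule sum.swap)
  also have "\<dots> = (\<Sum>i<N. \<Sum>a<d. \<Sum>j<N. \<Sum>b<d. ?F i j a b)"
    by (rule sum.cong[OF refl], rule sum.cong[OF refl]) (rule sum.swap)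
  also have "\<dots> = (\<Sum>i<N. \<Sum>j<N. \<Sum>a<d. \<Sum>b<d. ?F i j a b)"
    by (rule sum.cong[OF refl]) (rule sum.swap)
  also have "\<dots> = (\<Sum>i<N. \<Sum>j<N. q i * q j * ((w i \<bullet>c w j) * (w j \<bullet>c w i)))"
  proof (rule sum.cong[OF refl], rule sum.cong[OF refl])
    fix i j assume i: "i \<in> {..<N}" and j: "j \<in> {..<N}"
    have e1: "(\<Sum>a<d. w i $ a * cnj (w j $ a)) = w i \<bullet>c w j" using w j by (simp add: cdot_carrier)
    have e2: "(\<Sum>b<d. w j $ b * cnj (w i $ b)) = w j \<bullet>c w i" using w i by (simp add: cdot_carrier)
    have "(\<Sum>a<d. \<Sum>b<d. ?F i j a b) = q i * q j * ((\<Sum>a<d. w i $ a * cnj (w j $ a)) * (\<Sum>b<d. w j $ b * cnj (w i $ b)))"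
      by (simp only: sum_product) (simp only: sum_distrib_left)
    then show "(\<Sum>a<d. \<Sum>b<d. ?F i j a b) = q i * q j * ((w i \<bullet>c w j) * (w j \<bullet>c w i))"
      by (simp only: e1 e2)
  qed
  finally show ?thesis .
qed

lemma GQ:
  assumes w: "\<And>i. i < N \<Longrightarrow> w i \<in> carrier_vec d" and v: "v \<in> carrier_vec d"
  shows "(\<Sum>a<d. \<Sum>b<d. cnj (v $ a) * (\<Sum>i<N. q i * (w i $ a * cnj (w i $ b))) * v $ b)
     = (\<Sum>i<N. q i * ((w i \<bullet>c v) * (v \<bullet>c w i)))"
proof -
  let ?F = "\<lambda>i a b. q i * ((w i $ a * cnj (v $ a)) * (v $ b * cnj (w i $ b)))"
  have "(\<Sum>a<d. \<Sum>b<d. cnj (v $ a) * (\<Sum>i<N. q i * (w i $ a * cnj (w i $ b))) * v $ b)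
      = (\<Sum>a<d. \<Sum>b<d. \<Sum>i<N. ?F i a b)"
    by (simp only: sum_distrib_left sum_distrib_right) (simp only: mult_ac)
  also have "\<dots> = (\<Sum>a<d. \<Sum>i<N. \<Sum>b<d. ?F i a b)"
    by (rule sum.cong[OF refl]) (rule sum.swap)
  also have "\<dots> = (\<Sum>i<N. \<Sum>a<d. \<Sum>b<d. ?F i a b)"
    by (rule sum.swap)
  also have "\<dots> = (\<Sum>i<N. q i * ((w i \<bullet>c v) * (v \<bullet>c w i)))"
  proof (rule sum.cong[OF refl])
    fix i assume i: "i \<in> {..<N}"
    have e1: "(\<Sum>a<d. w i $ a * cnj (v $ a)) = w i \<bullet>c v" using v by (simp add: cdot_carrier)
    have e2: "(\<Sum>b<d. v $ b * cnj (w i $ b)) = v \<bullet>c w i" using w i by (simp add: cdot_carrier)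
    have "(\<Sum>a<d. \<Sum>b<d. ?F i a b) = q i * ((\<Sum>a<d. w i $ a * cnj (v $ a)) * (\<Sum>b<d. v $ b * cnj (w i $ b)))"
      by (simp only: sum_product) (simp only: sum_distrib_left)
    then show "(\<Sum>a<d. \<Sum>b<d. ?F i a b) = q i * ((w i \<bullet>c v) * (v \<bullet>c w i))"
      by (simp only: e1 e2)
  qed
  finally show ?thesis .
qed


lemma XX_apply:
  assumes u: "\<And>l. l < k \<Longrightarrow> u l \<in> carrier_vec d"
    and orth: "\<And>l l'. l < k \<Longrightarrow> l' < k \<Longrightarrow> u l \<bullet>c u l' = (if l = l' then 1 else 0)"
    and l: "l < k"
  shows "(\<Sum>b<d. XX k u a b * u l $ b) = u l $ a"
proof -
  have "(\<Sum>b<d. XX k u a b * u l $ b) = (\<Sum>b<d. \<Sum>l'<k. u l' $ a * (u l $ b * cnj (u l' $ b)))"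
    unfolding XX_def by (simp only: sum_distrib_right) (simp only: mult_ac)
  also have "\<dots> = (\<Sum>l'<k. \<Sum>b<d. u l' $ a * (u l $ b * cnj (u l' $ b)))"
    by (rule sum.swap)
  also have "\<dots> = (\<Sum>l'<k. if l' = l then u l' $ a else 0)"
  proof (rule sum.cong[OF refl])
    fix l' assume l': "l' \<in> {..<k}"
    have "(\<Sum>b<d. u l $ b * cnj (u l' $ b)) = u l \<bullet>c u l'" using u l' by (simp add: cdot_carrier)
    also have "\<dots> = (if l' = l then 1 else 0)" using orth l l' by auto
    finally have e: "(\<Sum>b<d. u l $ b * cnj (u l' $ b)) = (if l' = l then 1 else 0)" .
    have "(\<Sum>b<d. u l' $ a * (u l $ b * cnj (u l' $ b))) = u l' $ a * (\<Sum>b<d. u l $ b * cnj (u l' $ b))"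
      by (simp only: sum_distrib_left)
    then show "(\<Sum>b<d. u l' $ a * (u l $ b * cnj (u l' $ b))) = (if l' = l then u l' $ a else 0)"
      by (simp only: e) simp
  qed
  also have "\<dots> = u l $ a" using l by simp
  finally show ?thesis .
qed

lemma RT:
  assumes u: "\<And>l. l < k \<Longrightarrow> u l \<in> carrier_vec d"
    and orth: "\<And>l l'. l < k \<Longrightarrow> l' < k \<Longrightarrow> u l \<bullet>c u l' = (if l = l' then 1 else 0)"
    and kd: "k < d"
  shows "(\<Sum>a<d. (1 / of_nat (d - k)) * ((if a = a then 1 else 0) - XX k u a a)) = (1::complex)"
proof -
  have s: "(\<Sum>a<d. 1 - XX k u a a) = of_nat d - of_nat k" using XX_trace[OF u orth] by (simp add: sum_subtractf)
  have "(\<Sum>a<d. (1 / of_nat (d - k)) * ((if a = a then 1 else 0) - XX k u a a))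
     = (\<Sum>a<d. 1 - XX k u a a) / of_nat (d - k)"
    by (simp add: sum_divide_distrib)
  also have "\<dots> = 1" using kd by (simp add: s of_nat_diff)
  finally show ?thesis .
qed

lemma RP:
  assumes u: "\<And>l. l < k \<Longrightarrow> u l \<in> carrier_vec d"
    and orth: "\<And>l l'. l < k \<Longrightarrow> l' < k \<Longrightarrow> u l \<bullet>c u l' = (if l = l' then 1 else 0)"
    and kd: "k < d"
  shows "(\<Sum>a<d. \<Sum>b<d. ((1 / of_nat (d - k)) * ((if a = b then 1 else 0) - XX k u a b)) *
             ((1 / of_nat (d - k)) * ((if b = a then 1 else 0) - XX k u b a))) = 1 / (of_nat (d - k) :: complex)"
proof -
  let ?c = "of_nat (d - k) :: complex"
  have c0: "?c \<noteq> 0" using kd by simp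
  have row: "(\<Sum>b<d. ((if a = b then 1 else 0) - XX k u a b) * ((if b = a then 1 else 0) - XX k u b a)) = 1 - XX k u a a"
    if a: "a < d" for a
  proof -
    have "(\<Sum>b<d. ((if a = b then 1 else 0) - XX k u a b) * ((if b = a then 1 else 0) - XX k u b a))
        = (\<Sum>b<d. (if b = a then 1 - 2 * XX k u a a else 0) + XX k u a b * XX k u b a)"
      by (rule sum.cong[OF refl]) (auto simp: algebra_simps)
    also have "\<dots> = (1 - 2 * XX k u a a) + XX k u a a"
      using a by (simp add: sum.distrib XX_proj[OF u orth])
    finally show ?thesis by simp
  qed
  have "(\<Sum>a<d. \<Sum>b<d. ((1 / ?c) * ((if a = b then 1 else 0) - XX k u a b)) *
             ((1 / ?c) * ((if b = a then 1 else 0) - XX k u b a)))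
      = (\<Sum>a<d. (1 / ?c) * (1 / ?c) * (\<Sum>b<d. ((if a = b then 1 else 0) - XX k u a b) * ((if b = a then 1 else 0) - XX k u b a)))"
    by (rule sum.cong[OF refl]) (simp add: sum_distrib_left mult_ac)
  also have "\<dots> = (\<Sum>a<d. (1 / ?c) * (1 / ?c) * (1 - XX k u a a))"
    by (rule sum.cong[OF refl]) (simp add: row)
  also have "\<dots> = (1 / ?c) * (\<Sum>a<d. (1 / ?c) * ((if a = a then 1 else 0) - XX k u a a))"
    by (simp add: sum_distrib_left mult_ac)
  also have "\<dots> = 1 / ?c" using RT[OF u orth kd] by simp
  finally show ?thesis .
qed

lemma RQ:
  assumes u: "\<And>l. l < k \<Longrightarrow> u l \<in> carrier_vec d"
    and orth: "\<And>l l'. l < k \<Longrightarrow> l' < k \<Longrightarrow> u l \<bullet>c u l' = (if l = l' then 1 else 0)"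
    and l: "l < k"
  shows "(\<Sum>a<d. \<Sum>b<d. cnj (u l $ a) * ((1 / of_nat (d - k)) * ((if a = b then 1 else 0) - XX k u a b)) * u l $ b) = (0::complex)"
proof -
  have "(\<Sum>b<d. cnj (u l $ a) * ((1 / of_nat (d - k)) * ((if a = b then 1 else 0) - XX k u a b)) * u l $ b) = 0"
    if a: "a < d" for a
  proof -
    have "(\<Sum>b<d. cnj (u l $ a) * ((1 / of_nat (d - k)) * ((if a = b then 1 else 0) - XX k u a b)) * u l $ b)
       = cnj (u l $ a) * (1 / of_nat (d - k)) * ((\<Sum>b<d. (if a = b then u l $ b else 0)) - (\<Sum>b<d. XX k u a b * u l $ b))"
    proof -
      have "\<And>b. cnj (u l $ a) * ((1 / of_nat (d - k)) * ((if a = b then 1 else 0) - XX k u a b)) * u l $ b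
          = cnj (u l $ a) * (1 / of_nat (d - k)) * ((if a = b then u l $ b else 0) - XX k u a b * u l $ b)"
        by (simp add: algebra_simps)
      then show ?thesis by (simp only: right_diff_distrib sum_subtractf sum_distrib_left)
    qed
    also have "\<dots> = 0" using a XX_apply[OF u orth l] by simp
    finally show ?thesis .
  qed
  then show ?thesis by simp
qed


lemma real_part:
  fixes p :: "nat \<Rightarrow> real" and g :: "nat \<Rightarrow> nat \<Rightarrow> real" and c N :: nat
  assumes p: "\<forall>i<N. p i > 0" and ps: "(\<Sum>i<N. p i) = 1"
    and g: "\<forall>i<N. \<forall>j<N. g i j \<ge> 0" and gd: "\<forall>i<N. g i i = 1"
    and P: "(\<Sum>i<N. \<Sum>j<N. p i * p j * g i j) = 1 / real c" and c: "c > 0"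
  shows "c \<le> N \<and> (N = c \<longrightarrow> (\<forall>i<N. \<forall>j<N. i \<noteq> j \<longrightarrow> g i j = 0))"
proof -
  have N: "N > 0" using ps by (cases N) auto
  define S2 where "S2 = (\<Sum>i<N. p i ^ 2)"
  define Off where "Off = (\<Sum>i<N. \<Sum>j\<in>{..<N} - {i}. p i * p j * g i j)"
  have "0 \<le> (\<Sum>i<N. (p i - 1 / real N) ^ 2)" by (simp add: sum_nonneg)
  also have "\<dots> = S2 - 2 / real N * (\<Sum>i<N. p i) + real N * (1 / real N) ^ 2"
    unfolding S2_def by (simp add: power2_diff sum.distrib sum_subtractf sum_distrib_left sum_divide_distrib algebra_simps)
  also have "\<dots> = S2 - 1 / real N" using N ps by (simp add: power2_eq_square field_simps)
  finally have S2N: "1 / real N \<le> S2" by simp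
  have split: "(\<Sum>i<N. \<Sum>j<N. p i * p j * g i j) = S2 + Off"
  proof -
    have "(\<Sum>i<N. \<Sum>j<N. p i * p j * g i j) = (\<Sum>i<N. p i ^ 2 + (\<Sum>j\<in>{..<N} - {i}. p i * p j * g i j))"
    proof (rule sum.cong[OF refl])
      fix i assume i: "i \<in> {..<N}"
      then show "(\<Sum>j<N. p i * p j * g i j) = p i ^ 2 + (\<Sum>j\<in>{..<N} - {i}. p i * p j * g i j)"
        using gd by (simp add: sum.remove[of "{..<N}" i] power2_eq_square)
    qed
    then show ?thesis unfolding S2_def Off_def by (simp add: sum.distrib)
  qed
  have offt: "\<forall>i\<in>{..<N}. \<forall>j\<in>{..<N} - {i}. 0 \<le> p i * p j * g i j"
    using p g by (metis DiffD1 lessThan_iff less_imp_le mult_nonneg_nonneg)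
  have Off0: "0 \<le> Off" unfolding Off_def using offt by (intro sum_nonneg) auto
  have cN: "1 / real N \<le> 1 / real c" using P split S2N Off0 by linarith
  then have "c \<le> N" using N c by (simp add: divide_le_cancel field_simps)
  moreover have "\<forall>i<N. \<forall>j<N. i \<noteq> j \<longrightarrow> g i j = 0" if Nc: "N = c"
  proof (intro allI impI)
    fix i j assume i: "i < N" and j: "j < N" and ij: "i \<noteq> j"
    have "Off \<le> 0" using P split S2N Nc by simp
    then have Offz: "Off = 0" using Off0 by simp
    have inner0: "\<forall>i\<in>{..<N}. (\<Sum>j\<in>{..<N} - {i}. p i * p j * g i j) = 0"
    proof -
      have nn: "\<forall>i\<in>{..<N}. 0 \<le> (\<Sum>j\<in>{..<N} - {i}. p i * p j * g i j)"
        using offt by (intro ballI sum_nonneg) blast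
      show ?thesis using Offz unfolding Off_def by (subst (asm) sum_nonneg_eq_0_iff) (simp_all add: nn)
    qed
    then have "(\<Sum>j\<in>{..<N} - {i}. p i * p j * g i j) = 0" using i by simp
    then have "\<forall>j'\<in>{..<N} - {i}. p i * p j' * g i j' = 0"
      by (subst (asm) sum_nonneg_eq_0_iff) (use offt i in auto)
    then have "p i * p j * g i j = 0" using j ij by auto
    then show "g i j = 0" using p i j by auto
  qed
  ultimately show ?thesis by blast
qed


lemma rho_dims: "dim_row (rho_S m n k \<alpha> \<beta>) = m * n" "dim_col (rho_S m n k \<alpha> \<beta>) = m * n"
  unfolding rho_S_def by auto

lemma rho_idx:
  assumes fam: "orth_prod_family m n k \<alpha> \<beta>" and a: "a < m * n" and b: "b < m * n"
  shows "rho_S m n k \<alpha> \<beta> $$ (a, b) = (1 / of_nat (m * n - k)) *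
     ((if a = b then 1 else 0) - XX k (\<lambda>l. tensor_vec (\<alpha> l) (\<beta> l)) a b)"
proof -
  have "ket_bra (tensor_vec (\<alpha> l) (\<beta> l)) $$ (a, b) = tensor_vec (\<alpha> l) (\<beta> l) $ a * cnj (tensor_vec (\<alpha> l) (\<beta> l) $ b)"
    if l: "l < k" for l
  proof -
    have "dim_vec (tensor_vec (\<alpha> l) (\<beta> l)) = m * n" by (rule carrier_vecD[OF ofam_unit[OF fam l]])
    then show ?thesis using a b by (intro ket_bra_idx) auto
  qed
  then show ?thesis unfolding rho_S_def XX_def using a b by simp
qed

lemma pad_id: "v \<in> carrier_vec d \<Longrightarrow> pad_vec d v = v"
  unfolding pad_vec_def by (intro eq_vecI) auto

lemma norm_sq: "(z::complex) * cnj z = of_real ((cmod z)^2)"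
  by (rule complex_norm_square[symmetric])

lemma decomp_bound:
  fixes p :: "nat \<Rightarrow> real"
  assumes fam: "orth_prod_family m n k \<alpha> \<beta>" and kd: "k < m * n"
    and dec: "\<forall>i<N. p i > 0 \<and> \<psi> i \<in> carrier_vec m \<and> \<phi> i \<in> carrier_vec n \<and>
               \<psi> i \<bullet>c \<psi> i = 1 \<and> \<phi> i \<bullet>c \<phi> i = 1"
    and eq: "rho_S m n k \<alpha> \<beta> = mat (m * n) (m * n) (\<lambda>(a, b). \<Sum>i<N. complex_of_real (p i) *
                 ket_bra (tensor_vec (\<psi> i) (\<phi> i)) $$ (a, b))"
  shows "m * n - k \<le> N \<and> (N = m * n - k \<longrightarrow> completable_in m n k \<alpha> \<beta>)"
proof -
  define d where "d = m * n"
  define c where "c = d - k"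
  define u where "u = (\<lambda>l. tensor_vec (\<alpha> l) (\<beta> l))"
  define w where "w = (\<lambda>i. tensor_vec (\<psi> i) (\<phi> i))"
  define q where "q = (\<lambda>i. complex_of_real (p i))"
  have kd': "k < d" using kd d_def by simp
  have c0: "c > 0" using kd' c_def by simp
  have u_car: "\<And>l. l < k \<Longrightarrow> u l \<in> carrier_vec d" unfolding u_def d_def using ofam_unit[OF fam] by blast
  have u_orth: "\<And>l l'. l < k \<Longrightarrow> l' < k \<Longrightarrow> u l \<bullet>c u l' = (if l = l' then 1 else 0)"
    unfolding u_def using ofam_orth[OF fam] by blast
  have dec': "p i > 0" "\<psi> i \<in> carrier_vec m" "\<phi> i \<in> carrier_vec n" "\<psi> i \<bullet>c \<psi> i = 1" "\<phi> i \<bullet>c \<phi> i = 1"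
    if "i < N" for i using dec that by blast+
  have w_dim: "dim_vec (w i) = d" if "i < N" for i
  proof -
    have "dim_vec (\<psi> i) = m" "dim_vec (\<phi> i) = n" using dec'(2,3)[OF that] by auto
    then show ?thesis unfolding w_def d_def by simp
  qed
  have w_car: "\<And>i. i < N \<Longrightarrow> w i \<in> carrier_vec d" using w_dim by (auto intro: carrier_vecI)
  have w_unit: "w i \<bullet>c w i = 1" if i: "i < N" for i
  proof -
    have "dim_vec (\<psi> i) = m" "dim_vec (\<phi> i) = n" using dec'(2,3)[OF i] by auto
    then have "w i \<bullet>c w i = (\<psi> i \<bullet>c \<psi> i) * (\<phi> i \<bullet>c \<phi> i)" unfolding w_def by (intro tensor_cdot) auto
    then show ?thesis using dec'(4,5)[OF i] by simp
  qed
  define M where "M = (\<lambda>a b. \<Sum>i<N. q i * (w i $ a * cnj (w i $ b)))"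
  have H: "(1 / of_nat c) * ((if a = b then 1 else 0) - XX k u a b) = M a b" if a: "a < d" and b: "b < d" for a b
  proof -
    have "rho_S m n k \<alpha> \<beta> $$ (a, b) = (1 / of_nat c) * ((if a = b then 1 else 0) - XX k u a b)"
      using rho_idx[OF fam, of a b] a b unfolding d_def c_def u_def by simp
    moreover have "rho_S m n k \<alpha> \<beta> $$ (a, b) = M a b"
    proof -
      have "rho_S m n k \<alpha> \<beta> $$ (a, b) = (\<Sum>i<N. complex_of_real (p i) * ket_bra (w i) $$ (a, b))"
        unfolding eq w_def using a b d_def by simp
      also have "\<dots> = M a b" unfolding M_def q_def
        using a b w_dim by (intro sum.cong refl) (simp add: ket_bra_idx)
      finally show ?thesis .
    qed
    ultimately show ?thesis by simp
  qed
  have "complex_of_real (\<Sum>i<N. p i) = (\<Sum>i<N. q i * (w i \<bullet>c w i))"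
    unfolding q_def using w_unit by simp
  also have "\<dots> = (\<Sum>a<d. M a a)" unfolding M_def by (rule GT[OF w_car, symmetric])
  also have "\<dots> = (\<Sum>a<d. (1 / of_nat c) * ((if a = a then 1 else 0) - XX k u a a))"
    by (intro sum.cong refl) (simp only: H lessThan_iff)
  also have "\<dots> = 1" unfolding c_def by (rule RT[OF u_car u_orth kd'])
  finally have ps: "(\<Sum>i<N. p i) = 1" by (simp only: of_real_eq_1_iff)
  define g where "g = (\<lambda>i j. (cmod (w i \<bullet>c w j))^2)"
  have "complex_of_real (\<Sum>i<N. \<Sum>j<N. p i * p j * g i j) = (\<Sum>i<N. \<Sum>j<N. q i * q j * ((w i \<bullet>c w j) * (w j \<bullet>c w i)))"
  proof -
    have "(w i \<bullet>c w j) * (w j \<bullet>c w i) = complex_of_real (g i j)" if "i < N" "j < N" for i j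
      using cdot_swap[of "w j" "w i"] w_dim that unfolding g_def by (simp add: norm_sq)
    note e = this
    show ?thesis unfolding q_def of_real_sum of_real_mult by (intro sum.cong refl) (simp add: e)
  qed
  also have "\<dots> = (\<Sum>a<d. \<Sum>b<d. M a b * M b a)" unfolding M_def by (rule GP[OF w_car, symmetric])
  also have "\<dots> = (\<Sum>a<d. \<Sum>b<d. ((1 / of_nat c) * ((if a = b then 1 else 0) - XX k u a b)) *
             ((1 / of_nat c) * ((if b = a then 1 else 0) - XX k u b a)))"
    by (intro sum.cong refl) (simp only: H lessThan_iff)
  also have "\<dots> = 1 / of_nat c" unfolding c_def by (rule RP[OF u_car u_orth kd'])
  also have "\<dots> = complex_of_real (1 / real c)" by simp
  finally have P: "(\<Sum>i<N. \<Sum>j<N. p i * p j * g i j) = 1 / real c" by (simp only: of_real_eq_iff)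
  have gd: "\<forall>i<N. g i i = 1" unfolding g_def using w_unit by simp
  have gn: "\<forall>i<N. \<forall>j<N. g i j \<ge> 0" unfolding g_def by simp
  have pp: "\<forall>i<N. p i > 0" using dec' by blast
  have R: "c \<le> N \<and> (N = c \<longrightarrow> (\<forall>i<N. \<forall>j<N. i \<noteq> j \<longrightarrow> g i j = 0))"
    by (rule real_part[OF pp ps gn gd P c0])
  have wu: "w i \<bullet>c u l = 0" if i: "i < N" and l: "l < k" for i l
  proof -
    define h where "h = (\<lambda>i. (cmod (w i \<bullet>c u l))^2)"
    have "complex_of_real (\<Sum>i<N. p i * h i) = (\<Sum>i<N. q i * ((w i \<bullet>c u l) * (u l \<bullet>c w i)))"
    proof -
      have "(w i \<bullet>c u l) * (u l \<bullet>c w i) = complex_of_real (h i)" if "i < N" for i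
        using cdot_swap[of "u l" "w i"] w_dim[OF that] u_car[OF l] unfolding h_def by (simp add: norm_sq)
      note e = this
      show ?thesis unfolding q_def of_real_sum of_real_mult by (intro sum.cong refl) (simp add: e)
    qed
    also have "\<dots> = (\<Sum>a<d. \<Sum>b<d. cnj (u l $ a) * M a b * u l $ b)" unfolding M_def by (rule GQ[OF w_car u_car[OF l], symmetric])
    also have "\<dots> = (\<Sum>a<d. \<Sum>b<d. cnj (u l $ a) * ((1 / of_nat c) * ((if a = b then 1 else 0) - XX k u a b)) * u l $ b)"
      by (intro sum.cong refl) (simp only: H lessThan_iff)
    also have "\<dots> = 0" unfolding c_def by (rule RQ[OF u_car u_orth l])
    finally have "complex_of_real (\<Sum>i<N. p i * h i) = 0" .
    then have "(\<Sum>i<N. p i * h i) = 0" by (simp only: of_real_eq_0_iff)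
    moreover have "\<forall>i\<in>{..<N}. 0 \<le> p i * h i" using pp unfolding h_def by (simp add: less_imp_le)
    ultimately have "\<forall>i\<in>{..<N}. p i * h i = 0" using sum_nonneg_eq_0_iff[of "{..<N}" "\<lambda>i. p i * h i"] by blast
    then have "p i * h i = 0" using i by blast
    moreover have "p i > 0" using i pp by blast
    ultimately have "h i = 0" by simp
    then show ?thesis unfolding h_def by simp
  qed
  have "completable_in m n k \<alpha> \<beta>" if Nc: "N = c"
  proof -
    define \<alpha>2 where "\<alpha>2 = (\<lambda>l. if l < k then \<alpha> l else \<psi> (l - k))"
    define \<beta>2 where "\<beta>2 = (\<lambda>l. if l < k then \<beta> l else \<phi> (l - k))"
    have t2: "tensor_vec (\<alpha>2 l) (\<beta>2 l) = (if l < k then u l else w (l - k))" for l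
      unfolding \<alpha>2_def \<beta>2_def u_def w_def by simp
    have idx: "l - k < N" if "l < m * n" "\<not> l < k" for l using that Nc c_def d_def by simp
    have "orth_prod_family m n (m * n) \<alpha>2 \<beta>2"
      unfolding orth_prod_family_def
    proof (intro conjI allI impI)
      fix l assume l: "l < m * n"
      show "\<alpha>2 l \<in> carrier_vec m"
        by (cases "l < k") (simp_all add: \<alpha>2_def ofam_D(1)[OF fam] dec'(2)[OF idx[OF l]])
      show "\<beta>2 l \<in> carrier_vec n"
        by (cases "l < k") (simp_all add: \<beta>2_def ofam_D(2)[OF fam] dec'(3)[OF idx[OF l]])
      show "\<alpha>2 l \<bullet>c \<alpha>2 l = 1"
        by (cases "l < k") (simp_all add: \<alpha>2_def ofam_D(3)[OF fam] dec'(4)[OF idx[OF l]])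
      show "\<beta>2 l \<bullet>c \<beta>2 l = 1"
        by (cases "l < k") (simp_all add: \<beta>2_def ofam_D(4)[OF fam] dec'(5)[OF idx[OF l]])
    next
      fix l l' assume l: "l < m * n" and l': "l' < m * n" and ll: "l \<noteq> l'"
      show "tensor_vec (\<alpha>2 l) (\<beta>2 l) \<bullet>c tensor_vec (\<alpha>2 l') (\<beta>2 l') = 0"
      proof (cases "l < k")
        case True
        show ?thesis
        proof (cases "l' < k")
          case True
          then show ?thesis using \<open>l < k\<close> u_orth ll t2 by simp
        next
          case False
          have "u l \<bullet>c w (l' - k) = cnj (w (l' - k) \<bullet>c u l)"
            using w_dim[OF idx[OF l' False]] carrier_vecD[OF u_car[OF \<open>l < k\<close>]] by (intro cdot_swap) simp
          then show ?thesis using t2 \<open>l < k\<close> False wu[OF idx[OF l' False] \<open>l < k\<close>] by simp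
        qed
      next
        case False
        show ?thesis
        proof (cases "l' < k")
          case True
          then show ?thesis using t2 False wu[OF idx[OF l False] True] by simp
        next
          case False': False
          have "g (l - k) (l' - k) = 0" using R Nc idx[OF l False] idx[OF l' False'] ll False False' by auto
          then show ?thesis using t2 False False' unfolding g_def by simp
        qed
      qed
    qed
    moreover have "\<forall>l<k. \<alpha>2 l = pad_vec m (\<alpha> l) \<and> \<beta>2 l = pad_vec n (\<beta> l)"
    proof (intro allI impI conjI)
      fix l assume l: "l < k"
      show "\<alpha>2 l = pad_vec m (\<alpha> l)" unfolding \<alpha>2_def using l pad_id[OF ofam_D(1)[OF fam l]] by simp
      show "\<beta>2 l = pad_vec n (\<beta> l)" unfolding \<beta>2_def using l pad_id[OF ofam_D(2)[OF fam l]] by simp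
    qed
    ultimately show ?thesis unfolding completable_in_def by blast
  qed
  then show ?thesis using R c_def d_def by simp
qed


lemma rank_le_orth:
  fixes A :: "complex mat" and u :: "nat \<Rightarrow> complex vec"
  assumes A: "A \<in> carrier_mat d nc"
    and u: "\<And>l. l < k \<Longrightarrow> u l \<in> carrier_vec d"
    and orth: "\<And>l l'. l < k \<Longrightarrow> l' < k \<Longrightarrow> u l \<bullet>c u l' = (if l = l' then 1 else 0)"
    and colorth: "\<And>j l. j < nc \<Longrightarrow> l < k \<Longrightarrow> col A j \<bullet>c u l = 0"
  shows "vec_space.rank d A + k \<le> d"
proof -
  interpret V: vec_space "TYPE(complex)" d .
  let ?P = "\<lambda>T. T \<subseteq> set (cols A) \<and> V.lin_indpt T"
  have P0: "?P {}" by (simp add: V.lin_dep_def)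
  obtain S where fS: "finite S" and S: "maximal S ?P"
    using maximal_exists_superset[of "set (cols A)" ?P "{}", OF _ _ P0] by auto
  have rk: "V.rank A = card S" by (rule V.rank_card_indpt[OF A S])
  have Sc: "S \<subseteq> set (cols A)" and Sli: "V.lin_indpt S" using S unfolding maximal_def by auto
  have colsc: "set (cols A) \<subseteq> carrier_vec d" using A cols_dim by blast
  have Scar: "S \<subseteq> carrier_vec d" using Sc colsc by blast
  have Sorth: "x \<bullet>c u l = 0" if x: "x \<in> S" and l: "l < k" for x l
  proof -
    obtain j where j: "j < length (cols A)" "x = cols A ! j" using x Sc by (metis in_set_conv_nth subsetD)
    then have "j < nc" "x = col A j" using A by auto
    then show ?thesis using colorth l by simp
  qed
  define U where "U = u ` {..<k}"
  have inj: "inj_on u {..<k}"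
  proof (rule inj_onI)
    fix l l' assume l: "l \<in> {..<k}" and l': "l' \<in> {..<k}" and e: "u l = u l'"
    have "u l \<bullet>c u l' = 1" using e orth[of l' l'] l' by simp
    then show "l = l'" using orth[of l l'] l l' by (auto split: if_splits)
  qed
  have cU: "card U = k" unfolding U_def using card_image[OF inj] by simp
  have Ucar: "U \<subseteq> carrier_vec d" unfolding U_def using u by auto
  have disj: "S \<inter> U = {}"
  proof (rule ccontr)
    assume "S \<inter> U \<noteq> {}"
    then obtain l where l: "l < k" and "u l \<in> S" unfolding U_def by auto
    then have "u l \<bullet>c u l = 0" using Sorth by blast
    then show False using orth[of l l] l by simp
  qed
  have ip: "V.lincomb a B \<bullet>c y = (\<Sum>x\<in>B. a x * (x \<bullet>c y))"
    if B: "finite B" "B \<subseteq> carrier_vec d" and y: "y \<in> carrier_vec d" for a B y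
  proof -
    have "V.lincomb a B \<bullet>c y = (\<Sum>i<d. V.lincomb a B $ i * cnj (y $ i))" using y by (simp add: cdot_carrier)
    also have "\<dots> = (\<Sum>i<d. \<Sum>x\<in>B. a x * (x $ i * cnj (y $ i)))"
      using B by (intro sum.cong refl) (simp add: V.lincomb_index sum_distrib_right mult.assoc)
    also have "\<dots> = (\<Sum>x\<in>B. \<Sum>i<d. a x * (x $ i * cnj (y $ i)))" by (rule sum.swap)
    also have "\<dots> = (\<Sum>x\<in>B. a x * (x \<bullet>c y))"
      using y by (intro sum.cong refl) (simp add: sum_distrib_left[symmetric] cdot_carrier)
    finally show ?thesis .
  qed
  have li: "V.lin_indpt (S \<union> U)"
  proof
    assume "V.lin_dep (S \<union> U)"
    then obtain B a v where fB: "finite B" and BSU: "B \<subseteq> S \<union> U" and lc: "V.lincomb a B = 0\<^sub>v d"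
      and vB: "v \<in> B" and av: "a v \<noteq> 0" unfolding V.lin_dep_def by blast
    have Bcar: "B \<subseteq> carrier_vec d" using BSU Scar Ucar by blast
    have aU: "a (u l) = 0" if l: "l < k" and ulB: "u l \<in> B" for l
    proof -
      have "0 = V.lincomb a B \<bullet>c u l" using lc u[OF l] by (simp add: cdot_carrier)
      also have "\<dots> = (\<Sum>x\<in>B. a x * (x \<bullet>c u l))" by (rule ip[OF fB Bcar u[OF l]])
      also have "\<dots> = (\<Sum>x\<in>B. if x = u l then a x else 0)"
      proof (rule sum.cong[OF refl])
        fix x assume xB: "x \<in> B"
        show "a x * (x \<bullet>c u l) = (if x = u l then a x else 0)"
        proof (cases "x \<in> S")
          case True
          then have "x \<noteq> u l" using disj l unfolding U_def by auto
          then show ?thesis using Sorth[OF True l] by simp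
        next
          case False
          then obtain l' where l': "l' < k" "x = u l'" using xB BSU unfolding U_def by auto
          then show ?thesis using orth[OF l'(1) l] orth[OF l l] by auto
        qed
      qed
      also have "\<dots> = a (u l)" using fB ulB by simp
      finally show ?thesis by simp
    qed
    define B' where "B' = B \<inter> S"
    have fB': "finite B'" unfolding B'_def using fB by simp
    have B'car: "B' \<subseteq> carrier_vec d" unfolding B'_def using Scar by blast
    have lc': "V.lincomb a B' = 0\<^sub>v d"
    proof (rule eq_vecI)
      show "dim_vec (V.lincomb a B') = dim_vec (0\<^sub>v d)" using V.lincomb_dim[OF fB' B'car] by simp
      fix i assume "i < dim_vec (0\<^sub>v d)"
      then have i: "i < d" by simp
      have "V.lincomb a B' $ i = (\<Sum>x\<in>B'. a x * x $ i)" by (rule V.lincomb_index[OF i B'car])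
      also have "\<dots> = (\<Sum>x\<in>B. a x * x $ i)"
      proof (rule sum.mono_neutral_left[OF fB])
        show "B' \<subseteq> B" unfolding B'_def by blast
        show "\<forall>x\<in>B - B'. a x * x $ i = 0"
        proof
          fix x assume "x \<in> B - B'"
          then obtain l where "l < k" "x = u l" "u l \<in> B" using BSU unfolding B'_def U_def by auto
          then show "a x * x $ i = 0" using aU by simp
        qed
      qed
      also have "\<dots> = V.lincomb a B $ i" by (rule V.lincomb_index[OF i Bcar, symmetric])
      also have "\<dots> = 0\<^sub>v d $ i" using lc by simp
      finally show "V.lincomb a B' $ i = 0\<^sub>v d $ i" .
    qed
    show False
    proof (cases "v \<in> S")
      case True
      then have "V.lin_dep S" unfolding V.lin_dep_def using fB' lc' vB av unfolding B'_def
        by (intro exI[of _ B'] exI[of _ a] exI[of _ v]) (auto simp: B'_def)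
      then show False using Sli by simp
    next
      case False
      then obtain l where "l < k" "v = u l" using vB BSU unfolding U_def by auto
      then show False using aU vB av by simp
    qed
  qed
  have "card (S \<union> U) \<le> d" using V.li_le_dim(2)[OF V.fin_dim _ li] Scar Ucar V.dim_is_n by simp
  moreover have "card (S \<union> U) = card S + k" using card_Un_disjoint[OF fS _ disj] cU unfolding U_def by simp
  ultimately show ?thesis using rk by simp
qed


lemma XX_cnj: "cnj (XX k u a b) = XX k u b a"
  unfolding XX_def by (simp add: cnj_sum mult.commute)

lemma rho_rank:
  assumes fam: "orth_prod_family m n k \<alpha> \<beta>" and kd: "k < m * n"
  shows "mat_rank (rho_S m n k \<alpha> \<beta>) \<le> m * n - k"
proof -
  define d where "d = m * n"
  define u where "u = (\<lambda>l. tensor_vec (\<alpha> l) (\<beta> l))"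
  define c where "c = (of_nat (d - k) :: complex)"
  have u_car: "\<And>l. l < k \<Longrightarrow> u l \<in> carrier_vec d" unfolding u_def d_def using ofam_unit[OF fam] by blast
  have u_orth: "\<And>l l'. l < k \<Longrightarrow> l' < k \<Longrightarrow> u l \<bullet>c u l' = (if l = l' then 1 else 0)"
    unfolding u_def using ofam_orth[OF fam] by blast
  have car: "rho_S m n k \<alpha> \<beta> \<in> carrier_mat d d" using rho_dims[of m n k \<alpha> \<beta>] d_def by (auto intro: carrier_matI)
  have colorth: "col (rho_S m n k \<alpha> \<beta>) j \<bullet>c u l = 0" if j: "j < d" and l: "l < k" for j l
  proof -
    have "col (rho_S m n k \<alpha> \<beta>) j \<bullet>c u l = (\<Sum>a<d. rho_S m n k \<alpha> \<beta> $$ (a, j) * cnj (u l $ a))"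
      using u_car[OF l] car j by (simp add: cdot_carrier[symmetric])
    also have "\<dots> = (\<Sum>a<d. (1 / c) * ((if a = j then cnj (u l $ a) else 0) - XX k u a j * cnj (u l $ a)))"
    proof (rule sum.cong[OF refl])
      fix a assume "a \<in> {..<d}"
      then have a: "a < m * n" using d_def by simp
      show "rho_S m n k \<alpha> \<beta> $$ (a, j) * cnj (u l $ a) = (1 / c) * ((if a = j then cnj (u l $ a) else 0) - XX k u a j * cnj (u l $ a))"
      proof -
        have r: "rho_S m n k \<alpha> \<beta> $$ (a, j) = (1 / c) * ((if a = j then 1 else 0) - XX k u a j)"
          using rho_idx[OF fam a, of j] j d_def unfolding u_def c_def by simp
        show ?thesis unfolding r by (cases "a = j") (simp_all add: algebra_simps)
      qed
    qed
    also have "\<dots> = (1 / c) * ((\<Sum>a<d. if a = j then cnj (u l $ a) else 0) - (\<Sum>a<d. XX k u a j * cnj (u l $ a)))"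
      by (simp only: sum_distrib_left[symmetric] sum_subtractf)
    also have "(\<Sum>a<d. XX k u a j * cnj (u l $ a)) = cnj (\<Sum>a<d. XX k u j a * u l $ a)"
      by (simp add: cnj_sum XX_cnj)
    also have "(\<Sum>a<d. XX k u j a * u l $ a) = u l $ j" by (rule XX_apply[OF u_car u_orth l])
    finally show ?thesis using j by simp
  qed
  have "vec_space.rank d (rho_S m n k \<alpha> \<beta>) + k \<le> d"
    by (rule rank_le_orth[OF car u_car u_orth colorth])
  then show ?thesis unfolding mat_rank_def using rho_dims d_def by simp
qed


lemma merge:
  fixes q :: "nat \<Rightarrow> real" and \<psi> \<phi> :: "nat \<Rightarrow> complex vec"
  assumes fin: "finite J" and qpos: "\<forall>j\<in>J. q j > 0"
    and props: "\<forall>j\<in>J. \<psi> j \<in> carrier_vec m \<and> \<phi> j \<in> carrier_vec n \<and> \<psi> j \<bullet>c \<psi> j = 1 \<and> \<phi> j \<bullet>c \<phi> j = 1"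
  shows "\<exists>(N::nat) p \<psi>' \<phi>'. (\<forall>i<N. p i > 0 \<and> \<psi>' i \<in> carrier_vec m \<and> \<phi>' i \<in> carrier_vec n \<and>
               \<psi>' i \<bullet>c \<psi>' i = 1 \<and> \<phi>' i \<bullet>c \<phi>' i = 1) \<and>
        inj_on (\<lambda>i. ket_bra (tensor_vec (\<psi>' i) (\<phi>' i))) {..<N} \<and>
        (\<forall>X Y. (\<Sum>j\<in>J. complex_of_real (q j) * ket_bra (tensor_vec (\<psi> j) (\<phi> j)) $$ (X, Y)) =
               (\<Sum>i<N. complex_of_real (p i) * ket_bra (tensor_vec (\<psi>' i) (\<phi>' i)) $$ (X, Y)))"
proof -
  define Kf where "Kf = (\<lambda>j. ket_bra (tensor_vec (\<psi> j) (\<phi> j)))"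
  define K where "K = Kf ` J"
  have finK: "finite K" unfolding K_def using fin by simp
  obtain h where h: "bij_betw h {0..<card K} K" using ex_bij_betw_nat_finite[OF finK] by blast
  define N where "N = card K"
  have hN: "bij_betw h {..<N} K" using h unfolding N_def by (simp add: atLeast0LessThan)
  define rep where "rep = (\<lambda>i. SOME j. j \<in> J \<and> Kf j = h i)"
  have rep: "rep i \<in> J \<and> Kf (rep i) = h i" if i: "i < N" for i
  proof -
    have "h i \<in> K" using hN i by (auto simp: bij_betw_def)
    then have "\<exists>j. j \<in> J \<and> Kf j = h i" unfolding K_def by auto
    then show ?thesis unfolding rep_def by (rule someI_ex)
  qed
  define p where "p = (\<lambda>i. \<Sum>j\<in>{j\<in>J. Kf j = h i}. q j)"
  have ppos: "p i > 0" if i: "i < N" for i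
    unfolding p_def using fin rep[OF i] qpos by (intro sum_pos) auto
  define \<psi>' where "\<psi>' = (\<lambda>i. \<psi> (rep i))"
  define \<phi>' where "\<phi>' = (\<lambda>i. \<phi> (rep i))"
  have kb: "ket_bra (tensor_vec (\<psi>' i) (\<phi>' i)) = h i" if "i < N" for i
    using rep[OF that] unfolding \<psi>'_def \<phi>'_def Kf_def by simp
  have inj: "inj_on (\<lambda>i. ket_bra (tensor_vec (\<psi>' i) (\<phi>' i))) {..<N}"
  proof (rule inj_onI)
    fix i i' assume "i \<in> {..<N}" "i' \<in> {..<N}" "ket_bra (tensor_vec (\<psi>' i) (\<phi>' i)) = ket_bra (tensor_vec (\<psi>' i') (\<phi>' i'))"
    then have "h i = h i'" "i \<in> {..<N}" "i' \<in> {..<N}" using kb by auto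
    then show "i = i'" using hN unfolding bij_betw_def inj_on_def by blast
  qed
  have eq: "(\<Sum>j\<in>J. complex_of_real (q j) * Kf j $$ (X, Y)) =
               (\<Sum>i<N. complex_of_real (p i) * ket_bra (tensor_vec (\<psi>' i) (\<phi>' i)) $$ (X, Y))" for X Y
  proof -
    have "(\<Sum>j\<in>J. complex_of_real (q j) * Kf j $$ (X, Y)) =
        (\<Sum>P\<in>K. \<Sum>j\<in>{j. j \<in> J \<and> Kf j = P}. complex_of_real (q j) * Kf j $$ (X, Y))"
      unfolding K_def by (rule sum.image_gen[OF fin])
    also have "\<dots> = (\<Sum>P\<in>K. complex_of_real (\<Sum>j\<in>{j. j \<in> J \<and> Kf j = P}. q j) * P $$ (X, Y))"
    proof (rule sum.cong[OF refl])
      fix P assume "P \<in> K"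
      have "(\<Sum>j\<in>{j. j \<in> J \<and> Kf j = P}. complex_of_real (q j) * Kf j $$ (X, Y)) =
            (\<Sum>j\<in>{j. j \<in> J \<and> Kf j = P}. complex_of_real (q j) * P $$ (X, Y))"
        by (rule sum.cong) auto
      then show "(\<Sum>j\<in>{j. j \<in> J \<and> Kf j = P}. complex_of_real (q j) * Kf j $$ (X, Y)) =
            complex_of_real (\<Sum>j\<in>{j. j \<in> J \<and> Kf j = P}. q j) * P $$ (X, Y)"
        by (simp add: of_real_sum sum_distrib_right)
    qed
    also have "\<dots> = (\<Sum>i<N. complex_of_real (\<Sum>j\<in>{j. j \<in> J \<and> Kf j = h i}. q j) * h i $$ (X, Y))"
      by (rule sum.reindex_bij_betw[OF hN, symmetric])
    also have "\<dots> = (\<Sum>i<N. complex_of_real (p i) * ket_bra (tensor_vec (\<psi>' i) (\<phi>' i)) $$ (X, Y))"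
      unfolding p_def using kb by (intro sum.cong refl) simp
    finally show ?thesis .
  qed
  have pr: "\<forall>i<N. p i > 0 \<and> \<psi>' i \<in> carrier_vec m \<and> \<phi>' i \<in> carrier_vec n \<and>
               \<psi>' i \<bullet>c \<psi>' i = 1 \<and> \<phi>' i \<bullet>c \<phi>' i = 1"
  proof (intro allI impI)
    fix i assume i: "i < N"
    have "rep i \<in> J" using rep[OF i] by blast
    then have "\<psi> (rep i) \<in> carrier_vec m \<and> \<phi> (rep i) \<in> carrier_vec n \<and> \<psi> (rep i) \<bullet>c \<psi> (rep i) = 1 \<and> \<phi> (rep i) \<bullet>c \<phi> (rep i) = 1"
      using props by blast
    then show "p i > 0 \<and> \<psi>' i \<in> carrier_vec m \<and> \<phi>' i \<in> carrier_vec n \<and> \<psi>' i \<bullet>c \<psi>' i = 1 \<and> \<phi>' i \<bullet>c \<phi>' i = 1"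
      using ppos[OF i] unfolding \<psi>'_def \<phi>'_def by blast
  qed
  have eq': "\<forall>X Y. (\<Sum>j\<in>J. complex_of_real (q j) * ket_bra (tensor_vec (\<psi> j) (\<phi> j)) $$ (X, Y)) =
               (\<Sum>i<N. complex_of_real (p i) * ket_bra (tensor_vec (\<psi>' i) (\<phi>' i)) $$ (X, Y))"
    using eq unfolding Kf_def by blast
  have "(\<forall>i<N. p i > 0 \<and> \<psi>' i \<in> carrier_vec m \<and> \<phi>' i \<in> carrier_vec n \<and>
               \<psi>' i \<bullet>c \<psi>' i = 1 \<and> \<phi>' i \<bullet>c \<phi>' i = 1) \<and>
        inj_on (\<lambda>i. ket_bra (tensor_vec (\<psi>' i) (\<phi>' i))) {..<N} \<and>
        (\<forall>X Y. (\<Sum>j\<in>J. complex_of_real (q j) * ket_bra (tensor_vec (\<psi> j) (\<phi> j)) $$ (X, Y)) =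
               (\<Sum>i<N. complex_of_real (p i) * ket_bra (tensor_vec (\<psi>' i) (\<phi>' i)) $$ (X, Y)))"
    using pr inj eq' by blast
  then show ?thesis by blast
qed


lemma normalize_vec:
  fixes v :: "complex vec"
  assumes v: "v \<in> carrier_vec m" and pos: "(\<Sum>i<m. (cmod (v $ i))^2) > 0"
  defines "s \<equiv> complex_of_real (sqrt (\<Sum>i<m. (cmod (v $ i))^2))"
  shows "vec m (\<lambda>i. v $ i / s) \<in> carrier_vec m" "vec m (\<lambda>i. v $ i / s) \<bullet>c vec m (\<lambda>i. v $ i / s) = 1"
    "s * s = complex_of_real (\<Sum>i<m. (cmod (v $ i))^2)" "cnj s = s" "s \<noteq> 0"
proof -
  define na where "na = (\<Sum>i<m. (cmod (v $ i))^2)"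
  have ss: "s * s = complex_of_real na" unfolding s_def na_def using pos
    by (simp only: of_real_mult[symmetric] real_sqrt_mult_self) simp
  then show "s * s = complex_of_real (\<Sum>i<m. (cmod (v $ i))^2)" unfolding na_def .
  show cs: "cnj s = s" unfolding s_def by simp
  show s0: "s \<noteq> 0" unfolding s_def using pos by simp
  show "vec m (\<lambda>i. v $ i / s) \<in> carrier_vec m" by simp
  have "vec m (\<lambda>i. v $ i / s) \<bullet>c vec m (\<lambda>i. v $ i / s) = (\<Sum>i<m. (v $ i * cnj (v $ i)) / (s * s))"
    by (simp add: cdot_def cs)
  also have "\<dots> = (\<Sum>i<m. v $ i * cnj (v $ i)) / (s * s)" by (simp add: sum_divide_distrib)
  also have "(\<Sum>i<m. v $ i * cnj (v $ i)) = complex_of_real na" unfolding na_def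
    by (simp add: norm_sq of_real_sum)
  finally have e: "vec m (\<lambda>i. v $ i / s) \<bullet>c vec m (\<lambda>i. v $ i / s) = complex_of_real na / (s * s)" .
  have nap: "na > 0" using pos na_def by simp
  have "complex_of_real na / (s * s) = 1" unfolding ss using nap by simp
  then show "vec m (\<lambda>i. v $ i / s) \<bullet>c vec m (\<lambda>i. v $ i / s) = 1" using e by simp
qed

lemma zero_of_sq:
  fixes v :: "complex vec"
  assumes "\<not> (\<Sum>i<m. (cmod (v $ i))^2) > 0" "i < m"
  shows "v $ i = 0"
proof -
  have "(\<Sum>i<m. (cmod (v $ i))^2) = 0" using assms(1) by (meson not_less sum_nonneg zero_le_power2 antisym)
  then have "\<forall>i\<in>{..<m}. (cmod (v $ i))^2 = 0" by (subst (asm) sum_nonneg_eq_0_iff) auto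
  then show ?thesis using assms(2) by simp
qed


lemma mk_decomp:
  fixes a b :: "nat \<Rightarrow> complex vec" and c :: real
  assumes fin: "finite J" and ab: "\<forall>j\<in>J. a j \<in> carrier_vec m \<and> b j \<in> carrier_vec n" and c: "c > 0"
    and R: "R = mat (m * n) (m * n) (\<lambda>(X, Y). \<Sum>j\<in>J. complex_of_real (1 / c) *
                 (tensor_vec (a j) (b j) $ X * cnj (tensor_vec (a j) (b j) $ Y)))"
  shows "\<exists>N. product_decomposition m n R N"
proof -
  define na where "na = (\<lambda>j. \<Sum>i<m. (cmod (a j $ i))^2)"
  define nb where "nb = (\<lambda>j. \<Sum>i<n. (cmod (b j $ i))^2)"
  define J' where "J' = {j \<in> J. na j > 0 \<and> nb j > 0}"
  define sa where "sa = (\<lambda>j. complex_of_real (sqrt (na j)))"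
  define sb where "sb = (\<lambda>j. complex_of_real (sqrt (nb j)))"
  define \<psi> where "\<psi> = (\<lambda>j. vec m (\<lambda>i. a j $ i / sa j))"
  define \<phi> where "\<phi> = (\<lambda>j. vec n (\<lambda>i. b j $ i / sb j))"
  define q where "q = (\<lambda>j. na j * nb j / c)"
  have finJ': "finite J'" unfolding J'_def using fin by simp
  have nA: "\<psi> j \<in> carrier_vec m" "\<psi> j \<bullet>c \<psi> j = 1" "sa j * sa j = complex_of_real (na j)" "cnj (sa j) = sa j" "sa j \<noteq> 0"
    if j: "j \<in> J'" for j
    using normalize_vec[of "a j" m] ab j unfolding J'_def \<psi>_def sa_def na_def by auto
  have nB: "\<phi> j \<in> carrier_vec n" "\<phi> j \<bullet>c \<phi> j = 1" "sb j * sb j = complex_of_real (nb j)" "cnj (sb j) = sb j" "sb j \<noteq> 0"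
    if j: "j \<in> J'" for j
    using normalize_vec[of "b j" n] ab j unfolding J'_def \<phi>_def sb_def nb_def by auto
  have qpos: "\<forall>j\<in>J'. q j > 0" unfolding q_def J'_def using c by auto
  have props: "\<forall>j\<in>J'. \<psi> j \<in> carrier_vec m \<and> \<phi> j \<in> carrier_vec n \<and> \<psi> j \<bullet>c \<psi> j = 1 \<and> \<phi> j \<bullet>c \<phi> j = 1"
    using nA nB by blast
  obtain N :: nat and p \<psi>' \<phi>' where
    pr: "\<forall>i<N. p i > 0 \<and> \<psi>' i \<in> carrier_vec m \<and> \<phi>' i \<in> carrier_vec n \<and> \<psi>' i \<bullet>c \<psi>' i = 1 \<and> \<phi>' i \<bullet>c \<phi>' i = 1"
    and inj: "inj_on (\<lambda>i. ket_bra (tensor_vec (\<psi>' i) (\<phi>' i))) {..<N}"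
    and eq: "\<forall>X Y. (\<Sum>j\<in>J'. complex_of_real (q j) * ket_bra (tensor_vec (\<psi> j) (\<phi> j)) $$ (X, Y)) =
               (\<Sum>i<N. complex_of_real (p i) * ket_bra (tensor_vec (\<psi>' i) (\<phi>' i)) $$ (X, Y))"
    using merge[OF finJ' qpos props] by blast
  have entry: "R $$ (X, Y) = (\<Sum>i<N. complex_of_real (p i) * ket_bra (tensor_vec (\<psi>' i) (\<phi>' i)) $$ (X, Y))"
    if X: "X < m * n" and Y: "Y < m * n" for X Y
  proof -
    have n0: "n > 0" using X by (cases n) auto
    have Xd: "X div n < m" "X mod n < n" using X n0 by (auto simp: less_mult_imp_div_less)
    have Yd: "Y div n < m" "Y mod n < n" using Y n0 by (auto simp: less_mult_imp_div_less)
    have dimab: "dim_vec (a j) = m" "dim_vec (b j) = n" if "j \<in> J" for j using ab that by auto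
    have tidx: "tensor_vec (a j) (b j) $ Z = a j $ (Z div n) * b j $ (Z mod n)" if "j \<in> J" "Z < m * n" for j Z
      using tensor_idx[of Z "a j" "b j"] dimab[OF that(1)] that(2) by simp
    have "R $$ (X, Y) = (\<Sum>j\<in>J. complex_of_real (1 / c) * (tensor_vec (a j) (b j) $ X * cnj (tensor_vec (a j) (b j) $ Y)))"
      unfolding R using X Y by simp
    also have "\<dots> = (\<Sum>j\<in>J'. complex_of_real (1 / c) * (tensor_vec (a j) (b j) $ X * cnj (tensor_vec (a j) (b j) $ Y)))"
    proof (rule sum.mono_neutral_right[OF fin])
      show "J' \<subseteq> J" unfolding J'_def by blast
      show "\<forall>j\<in>J - J'. complex_of_real (1 / c) * (tensor_vec (a j) (b j) $ X * cnj (tensor_vec (a j) (b j) $ Y)) = 0"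
      proof
        fix j assume j: "j \<in> J - J'"
        then have "\<not> na j > 0 \<or> \<not> nb j > 0" unfolding J'_def by auto
        then have "a j $ (X div n) = 0 \<or> b j $ (X mod n) = 0"
          using zero_of_sq[of "a j" m "X div n"] zero_of_sq[of "b j" n "X mod n"] Xd unfolding na_def nb_def by auto
        then have "tensor_vec (a j) (b j) $ X = 0" using tidx[of j X] j X by auto
        then show "complex_of_real (1 / c) * (tensor_vec (a j) (b j) $ X * cnj (tensor_vec (a j) (b j) $ Y)) = 0" by simp
      qed
    qed
    also have "\<dots> = (\<Sum>j\<in>J'. complex_of_real (q j) * ket_bra (tensor_vec (\<psi> j) (\<phi> j)) $$ (X, Y))"
    proof (rule sum.cong[OF refl])
      fix j assume j: "j \<in> J'"
      then have jJ: "j \<in> J" unfolding J'_def by blast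
      have dpsi: "dim_vec (\<psi> j) = m" "dim_vec (\<phi> j) = n" unfolding \<psi>_def \<phi>_def by auto
      have tp: "tensor_vec (\<psi> j) (\<phi> j) $ Z = a j $ (Z div n) * b j $ (Z mod n) / (sa j * sb j)" if "Z < m * n" for Z
      proof -
        have "Z div n < m" "Z mod n < n" using that n0 by (auto simp: less_mult_imp_div_less)
        then show ?thesis using tensor_idx[of Z "\<psi> j" "\<phi> j"] dpsi that unfolding \<psi>_def \<phi>_def by simp
      qed
      have kb: "ket_bra (tensor_vec (\<psi> j) (\<phi> j)) $$ (X, Y) = tensor_vec (\<psi> j) (\<phi> j) $ X * cnj (tensor_vec (\<psi> j) (\<phi> j) $ Y)"
        using X Y dpsi by (intro ket_bra_idx) auto
      define A where "A = a j $ (X div n) * b j $ (X mod n)"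
      define B where "B = a j $ (Y div n) * b j $ (Y mod n)"
      have "ket_bra (tensor_vec (\<psi> j) (\<phi> j)) $$ (X, Y) = A * cnj B / ((sa j * sa j) * (sb j * sb j))"
        unfolding kb tp[OF X] tp[OF Y] A_def B_def using nA(4)[OF j] nB(4)[OF j] by (simp add: algebra_simps)
      also have "\<dots> = A * cnj B / complex_of_real (na j * nb j)" using nA(3)[OF j] nB(3)[OF j] by simp
      finally have k2: "ket_bra (tensor_vec (\<psi> j) (\<phi> j)) $$ (X, Y) = A * cnj B / complex_of_real (na j * nb j)" .
      have pos: "na j * nb j > 0" "na j > 0" "nb j > 0" using j unfolding J'_def by simp_all
      have "complex_of_real (q j) * ket_bra (tensor_vec (\<psi> j) (\<phi> j)) $$ (X, Y) = complex_of_real (1 / c) * (A * cnj B)"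
        unfolding k2 q_def using pos c by (simp add: field_simps)
      then show "complex_of_real (1 / c) * (tensor_vec (a j) (b j) $ X * cnj (tensor_vec (a j) (b j) $ Y)) =
          complex_of_real (q j) * ket_bra (tensor_vec (\<psi> j) (\<phi> j)) $$ (X, Y)"
        using tidx[OF jJ X] tidx[OF jJ Y] unfolding A_def B_def by simp
    qed
    also have "\<dots> = (\<Sum>i<N. complex_of_real (p i) * ket_bra (tensor_vec (\<psi>' i) (\<phi>' i)) $$ (X, Y))"
      using eq by blast
    finally show ?thesis .
  qed
  have "R = mat (m * n) (m * n) (\<lambda>(X, Y). \<Sum>i<N. complex_of_real (p i) * ket_bra (tensor_vec (\<psi>' i) (\<phi>' i)) $$ (X, Y))"
  proof (rule eq_matI)
    show "dim_row R = dim_row (mat (m * n) (m * n) (\<lambda>(X, Y). \<Sum>i<N. complex_of_real (p i) * ket_bra (tensor_vec (\<psi>' i) (\<phi>' i)) $$ (X, Y)))"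
      unfolding R by simp
    show "dim_col R = dim_col (mat (m * n) (m * n) (\<lambda>(X, Y). \<Sum>i<N. complex_of_real (p i) * ket_bra (tensor_vec (\<psi>' i) (\<phi>' i)) $$ (X, Y)))"
      unfolding R by simp
    fix i j assume "i < dim_row (mat (m * n) (m * n) (\<lambda>(X, Y). \<Sum>i<N. complex_of_real (p i) * ket_bra (tensor_vec (\<psi>' i) (\<phi>' i)) $$ (X, Y)))"
      "j < dim_col (mat (m * n) (m * n) (\<lambda>(X, Y). \<Sum>i<N. complex_of_real (p i) * ket_bra (tensor_vec (\<psi>' i) (\<phi>' i)) $$ (X, Y)))"
    then have ij: "i < m * n" "j < m * n" by auto
    show "R $$ (i, j) = mat (m * n) (m * n) (\<lambda>(X, Y). \<Sum>i<N. complex_of_real (p i) * ket_bra (tensor_vec (\<psi>' i) (\<phi>' i)) $$ (X, Y)) $$ (i, j)"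
      using entry[OF ij] ij by simp
  qed
  then show ?thesis unfolding product_decomposition_def using pr inj by blast
qed


lemma onb_complete:
  fixes e :: "nat \<Rightarrow> complex vec"
  assumes e: "\<And>j. j < D \<Longrightarrow> e j \<in> carrier_vec D"
    and orth: "\<And>i j. i < D \<Longrightarrow> j < D \<Longrightarrow> e i \<bullet>c e j = (if i = j then 1 else 0)"
    and x: "x < D" and y: "y < D"
  shows "(\<Sum>j<D. e j $ x * cnj (e j $ y)) = (if x = y then 1 else 0)"
proof -
  define E where "E = mat D D (\<lambda>(x, j). e j $ x)"
  define F where "F = mat D D (\<lambda>(j, y). cnj (e j $ y))"
  have Ec: "E \<in> carrier_mat D D" and Fc: "F \<in> carrier_mat D D" unfolding E_def F_def by auto
  have FE: "F * E = 1\<^sub>m D"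
  proof (rule eq_matI)
    fix i j assume i: "i < dim_row (1\<^sub>m D)" and j: "j < dim_col (1\<^sub>m D)"
    then have i': "i < D" and j': "j < D" by auto
    have "(F * E) $$ (i, j) = (\<Sum>t<D. cnj (e i $ t) * e j $ t)"
      using i' j' unfolding F_def E_def by (simp add: scalar_prod_def atLeast0LessThan)
    also have "\<dots> = e j \<bullet>c e i" using e[OF i'] by (simp add: cdot_carrier[symmetric] mult.commute)
    also have "\<dots> = 1\<^sub>m D $$ (i, j)" using orth[OF j' i'] i' j' by auto
    finally show "(F * E) $$ (i, j) = 1\<^sub>m D $$ (i, j)" .
  qed (auto simp: F_def E_def)
  have EF: "E * F = 1\<^sub>m D" by (rule mat_mult_left_right_inverse[OF Fc Ec FE])
  have "(E * F) $$ (x, y) = (\<Sum>j<D. e j $ x * cnj (e j $ y))"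
    using x y unfolding F_def E_def by (simp add: scalar_prod_def atLeast0LessThan)
  then show ?thesis using EF x y by simp
qed


lemma idx_embed:
  fixes X n n' m m' :: nat
  assumes X: "X < m * n" and nn: "n \<le> n'" and mm: "m \<le> m'"
  shows "(X div n * n' + X mod n) div n' = X div n" "(X div n * n' + X mod n) mod n' = X mod n"
    "X div n * n' + X mod n < m' * n'" "X div n < m" "X mod n < n"
proof -
  have n0: "n > 0" using X by (cases n) auto
  show xd: "X div n < m" using X by (simp add: less_mult_imp_div_less)
  show xm: "X mod n < n" using n0 by simp
  then have xm': "X mod n < n'" using nn by simp
  show "(X div n * n' + X mod n) div n' = X div n" using xm' by simp
  show "(X div n * n' + X mod n) mod n' = X mod n" using xm' by simp
  have "X div n * n' + X mod n < X div n * n' + n'" using xm' by simp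
  also have "\<dots> = (X div n + 1) * n'" by simp
  also have "\<dots> \<le> m * n'" using xd by (intro mult_right_mono) auto
  also have "\<dots> \<le> m' * n'" using mm by simp
  finally show "X div n * n' + X mod n < m' * n'" .
qed

lemma rho_separable:
  assumes fam: "orth_prod_family m n k \<alpha> \<beta>" and kd: "k < m * n"
    and mm: "m \<le> m'" and nn: "n \<le> n'" and comp: "completable_in m' n' k \<alpha> \<beta>"
  shows "\<exists>N. product_decomposition m n (rho_S m n k \<alpha> \<beta>) N"
proof -
  obtain \<alpha>' \<beta>' where fam': "orth_prod_family m' n' (m' * n') \<alpha>' \<beta>'"
    and pads: "\<forall>l<k. \<alpha>' l = pad_vec m' (\<alpha> l) \<and> \<beta>' l = pad_vec n' (\<beta> l)"
    using comp unfolding completable_in_def by blast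
  define D where "D = m' * n'"
  have kD: "k \<le> D" using kd mm nn unfolding D_def by (meson less_imp_le_nat mult_le_mono order_trans)
  define e where "e = (\<lambda>j. tensor_vec (\<alpha>' j) (\<beta>' j))"
  define u where "u = (\<lambda>l. tensor_vec (\<alpha> l) (\<beta> l))"
  define a where "a = (\<lambda>j. vec m (\<lambda>i. \<alpha>' j $ i))"
  define b where "b = (\<lambda>j. vec n (\<lambda>i. \<beta>' j $ i))"
  define J where "J = {k..<D}"
  define c where "c = real (m * n - k)"
  have c0: "c > 0" using kd unfolding c_def by (metis of_nat_0_less_iff zero_less_diff)
  have e_car: "\<And>j. j < D \<Longrightarrow> e j \<in> carrier_vec D" unfolding e_def D_def using ofam_unit[OF fam'] by blast
  have e_orth: "\<And>i j. i < D \<Longrightarrow> j < D \<Longrightarrow> e i \<bullet>c e j = (if i = j then 1 else 0)"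
    unfolding e_def D_def using ofam_orth[OF fam'] by blast
  have key: "(if X = Y then 1 else 0) - XX k u X Y =
       (\<Sum>j\<in>J. tensor_vec (a j) (b j) $ X * cnj (tensor_vec (a j) (b j) $ Y))"
    if X: "X < m * n" and Y: "Y < m * n" for X Y
  proof -
    define x where "x = X div n * n' + X mod n"
    define y where "y = Y div n * n' + Y mod n"
    note ix = idx_embed[OF X nn mm, folded x_def]
    note iy = idx_embed[OF Y nn mm, folded y_def]
    have xyD: "x < D" "y < D" using ix(3) iy(3) D_def by auto
    have xy: "(x = y) = (X = Y)"
    proof
      assume "x = y"
      then have "X div n = Y div n" "X mod n = Y mod n" using ix(1,2) iy(1,2) by metis+
      then show "X = Y" by (metis div_mult_mod_eq)
    qed (simp add: x_def y_def)
    have eidx: "e j $ z = \<alpha>' j $ (z div n') * \<beta>' j $ (z mod n')" if j: "j < D" and z: "z < D" for j z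
    proof -
      have "dim_vec (\<alpha>' j) = m'" "dim_vec (\<beta>' j) = n'" using ofam_D(1,2)[OF fam' j[unfolded D_def]] by auto
      then show ?thesis unfolding e_def using tensor_idx[of z "\<alpha>' j" "\<beta>' j"] z D_def by simp
    qed
    have elow: "e j $ x = u j $ X" "e j $ y = u j $ Y" if j: "j < k" for j
    proof -
      have jD: "j < D" using j kD by simp
      have dab: "dim_vec (\<alpha> j) = m" "dim_vec (\<beta> j) = n" using ofam_D(1,2)[OF fam j] by auto
      have pa: "\<alpha>' j $ i = \<alpha> j $ i" if "i < m" for i
        using pads j that mm dab unfolding pad_vec_def by simp
      have pb: "\<beta>' j $ i = \<beta> j $ i" if "i < n" for i
        using pads j that nn dab unfolding pad_vec_def by simp
      show "e j $ x = u j $ X" using eidx[OF jD xyD(1)] ix pa pb dab X unfolding u_def by (simp add: tensor_idx)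
      show "e j $ y = u j $ Y" using eidx[OF jD xyD(2)] iy pa pb dab Y unfolding u_def by (simp add: tensor_idx)
    qed
    have ehigh: "e j $ x = tensor_vec (a j) (b j) $ X" "e j $ y = tensor_vec (a j) (b j) $ Y" if j: "j \<in> J" for j
    proof -
      have jD: "j < D" using j J_def by simp
      show "e j $ x = tensor_vec (a j) (b j) $ X" using eidx[OF jD xyD(1)] ix X unfolding a_def b_def by (simp add: tensor_idx)
      show "e j $ y = tensor_vec (a j) (b j) $ Y" using eidx[OF jD xyD(2)] iy Y unfolding a_def b_def by (simp add: tensor_idx)
    qed
    have "(if X = Y then 1 else 0) = (\<Sum>j<D. e j $ x * cnj (e j $ y))"
      using onb_complete[OF e_car e_orth xyD] xy by simp
    also have "\<dots> = (\<Sum>j<k. e j $ x * cnj (e j $ y)) + (\<Sum>j\<in>J. e j $ x * cnj (e j $ y))"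
    proof -
      have "{..<D} = {..<k} \<union> J" using kD J_def by auto
      moreover have "{..<k} \<inter> J = {}" using J_def by auto
      ultimately show ?thesis by (simp add: sum.union_disjoint J_def)
    qed
    also have "(\<Sum>j<k. e j $ x * cnj (e j $ y)) = XX k u X Y"
      unfolding XX_def using elow by simp
    also have "(\<Sum>j\<in>J. e j $ x * cnj (e j $ y)) = (\<Sum>j\<in>J. tensor_vec (a j) (b j) $ X * cnj (tensor_vec (a j) (b j) $ Y))"
      using ehigh by simp
    finally show ?thesis by simp
  qed
  have R: "rho_S m n k \<alpha> \<beta> = mat (m * n) (m * n) (\<lambda>(X, Y). \<Sum>j\<in>J. complex_of_real (1 / c) *
                 (tensor_vec (a j) (b j) $ X * cnj (tensor_vec (a j) (b j) $ Y)))"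
  proof (rule eq_matI)
    fix X Y assume "X < dim_row (mat (m * n) (m * n) (\<lambda>(X, Y). \<Sum>j\<in>J. complex_of_real (1 / c) *
                 (tensor_vec (a j) (b j) $ X * cnj (tensor_vec (a j) (b j) $ Y))))"
      "Y < dim_col (mat (m * n) (m * n) (\<lambda>(X, Y). \<Sum>j\<in>J. complex_of_real (1 / c) *
                 (tensor_vec (a j) (b j) $ X * cnj (tensor_vec (a j) (b j) $ Y))))"
    then have X: "X < m * n" and Y: "Y < m * n" by auto
    have "rho_S m n k \<alpha> \<beta> $$ (X, Y) = (1 / of_nat (m * n - k)) * ((if X = Y then 1 else 0) - XX k u X Y)"
      using rho_idx[OF fam X Y] unfolding u_def by simp
    also have "\<dots> = complex_of_real (1 / c) * (\<Sum>j\<in>J. tensor_vec (a j) (b j) $ X * cnj (tensor_vec (a j) (b j) $ Y))"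
      unfolding key[OF X Y] c_def by simp
    also have "\<dots> = (\<Sum>j\<in>J. complex_of_real (1 / c) * (tensor_vec (a j) (b j) $ X * cnj (tensor_vec (a j) (b j) $ Y)))"
      by (simp add: sum_distrib_left)
    finally show "rho_S m n k \<alpha> \<beta> $$ (X, Y) = mat (m * n) (m * n) (\<lambda>(X, Y). \<Sum>j\<in>J. complex_of_real (1 / c) *
                 (tensor_vec (a j) (b j) $ X * cnj (tensor_vec (a j) (b j) $ Y))) $$ (X, Y)"
      using X Y by simp
  qed (auto simp: rho_dims)
  have ab: "\<forall>j\<in>J. a j \<in> carrier_vec m \<and> b j \<in> carrier_vec n" unfolding a_def b_def by auto
  show ?thesis by (rule mk_decomp[OF _ ab c0 R]) (simp add: J_def)
qed


theorem theorem2: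
  fixes m n k :: nat and \<alpha> \<beta> :: "nat \<Rightarrow> complex vec"
  assumes "partial_product_basis m n k \<alpha> \<beta>"
    and "\<not> completable_in m n k \<alpha> \<beta>"
    and "\<exists>m' n'. m \<le> m' \<and> n \<le> n' \<and> completable_in m' n' k \<alpha> \<beta>"
  shows "optimal_ensemble_cardinality m n (rho_S m n k \<alpha> \<beta>) > mat_rank (rho_S m n k \<alpha> \<beta>)"
proof -
  have fam: "orth_prod_family m n k \<alpha> \<beta>" and kd: "k < m * n"
    using assms(1) unfolding partial_product_basis_def by auto
  obtain m' n' where mm: "m \<le> m'" and nn: "n \<le> n'" and comp: "completable_in m' n' k \<alpha> \<beta>"
    using assms(3) by blast
  have ex: "\<exists>N. product_decomposition m n (rho_S m n k \<alpha> \<beta>) N"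
    by (rule rho_separable[OF fam kd mm nn comp])
  define L where "L = optimal_ensemble_cardinality m n (rho_S m n k \<alpha> \<beta>)"
  have pdL: "product_decomposition m n (rho_S m n k \<alpha> \<beta>) L"
    unfolding L_def optimal_ensemble_cardinality_def using ex by (rule LeastI_ex)
  then obtain p :: "nat \<Rightarrow> real" and \<psi> \<phi> where
    dec: "\<forall>i<L. p i > 0 \<and> \<psi> i \<in> carrier_vec m \<and> \<phi> i \<in> carrier_vec n \<and>
               \<psi> i \<bullet>c \<psi> i = 1 \<and> \<phi> i \<bullet>c \<phi> i = 1"
    and eq: "rho_S m n k \<alpha> \<beta> = mat (m * n) (m * n) (\<lambda>(a, b). \<Sum>i<L. complex_of_real (p i) *
                 ket_bra (tensor_vec (\<psi> i) (\<phi> i)) $$ (a, b))"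
    unfolding product_decomposition_def by blast
  have B: "m * n - k \<le> L \<and> (L = m * n - k \<longrightarrow> completable_in m n k \<alpha> \<beta>)"
    by (rule decomp_bound[OF fam kd dec eq])
  then have "m * n - k < L" using assms(2) by auto
  moreover have "mat_rank (rho_S m n k \<alpha> \<beta>) \<le> m * n - k" by (rule rho_rank[OF fam kd])
  ultimately show ?thesis unfolding L_def by simp
qed

end
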